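(* For all integers $r,c,K$ there exists an integer $N$ such that the following holds. Let $G$ be a digraph with maximum out-degree at most $c$ and let $S,T\subseteq V(G)$ be such that $|T|\ge N$ and for all $t,t'\in T$ there exist a vertex $s=s(t,t')\in S$, a directed path of length at most $r$ from $s$ to $t$ and a directed path of length at most $r$ from $s$ to $t'$. Then $G$ contains a crown of order $K$ as a depth-$r$ minor.
   Context: The crown of order $K$, $S_K$, is the digraph with vertices $v_1,\dots,v_K$ and $v_{ij}$ ($1\le i<j\le K$) and arcs $(v_{ij},v_i),(v_{ij},v_j)$. Depth-$r$ minors: a digraph $H$ has a directed model in $G$ if there is a map $\delta$ assigning to each $v\in V(H)$ a subgraph $\delta(v)\subseteq G$ and to each arc $e$ of $H$ an arc $\delta(e)$ of $G$ with (1) branch sets pairwise disjoint; (2) if $e=(u,v)$ and $\delta(e)=(u',v')$ then $u'\in\delta(u)$, $v'\in\delta(v)$; (3) for each $v$, with $\mathrm{in}(\delta(v))$ (resp. $\mathrm{out}(\delta(v))$) the vertices of $\delta(v)$ lying on images of arcs entering (resp. leaving) $v$: every in-vertex reaches every out-vertex by a directed path in $\delta(v)$, some vertex of $\delta(v)$ reaches all out-vertices, and some vertex of $\delta(v)$ is reached from all in-vertices. $H$ is a depth-$r$ minor of $G$ if such a model exists in which all paths in the branch sets have length at most $r$. *)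

theory Defs
  imports Main
begin

text \<open>A directed path is a nonempty list of distinct vertices with consecutive
  vertices joined by arcs; its length is the number of arcs, i.e. length p - 1.\<close>

definition dipath :: "('a \<times> 'a) set \<Rightarrow> 'a list \<Rightarrow> bool" where
  "dipath E p \<longleftrightarrow> p \<noteq> [] \<and> distinct p \<and> successively (\<lambda>x y. (x, y) \<in> E) p"

definition digraph :: "'a set \<Rightarrow> ('a \<times> 'a) set \<Rightarrow> bool" where
  "digraph V E \<longleftrightarrow> finite V \<and> E \<subseteq> V \<times> V"

definition max_outdeg_le :: "'a set \<Rightarrow> ('a \<times> 'a) set \<Rightarrow> nat \<Rightarrow> bool" where
  "max_outdeg_le V E c \<longleftrightarrow> (\<forall>v\<in>V. card {w. (v, w) \<in> E} \<le> c)"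

definition path_le :: "('a \<times> 'a) set \<Rightarrow> nat \<Rightarrow> 'a \<Rightarrow> 'a \<Rightarrow> bool" where
  "path_le E r s t \<longleftrightarrow> (\<exists>p. dipath E p \<and> hd p = s \<and> last p = t \<and> length p - 1 \<le> r)"

definition path_in :: "'a set \<Rightarrow> ('a \<times> 'a) set \<Rightarrow> 'a \<Rightarrow> 'a \<Rightarrow> bool" where
  "path_in B A x y \<longleftrightarrow> (\<exists>p. dipath A p \<and> set p \<subseteq> B \<and> hd p = x \<and> last p = y)"

definition in_verts :: "('b \<times> 'b) set \<Rightarrow> (('b \<times> 'b) \<Rightarrow> ('a \<times> 'a)) \<Rightarrow> 'a set \<Rightarrow> 'b \<Rightarrow> 'a set" where
  "in_verts EH d Bv v = {x \<in> Bv. \<exists>e\<in>EH. snd e = v \<and> (x = fst (d e) \<or> x = snd (d e))}"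

definition out_verts :: "('b \<times> 'b) set \<Rightarrow> (('b \<times> 'b) \<Rightarrow> ('a \<times> 'a)) \<Rightarrow> 'a set \<Rightarrow> 'b \<Rightarrow> 'a set" where
  "out_verts EH d Bv v = {x \<in> Bv. \<exists>e\<in>EH. fst e = v \<and> (x = fst (d e) \<or> x = snd (d e))}"

definition directed_model ::
  "'b set \<Rightarrow> ('b \<times> 'b) set \<Rightarrow> 'a set \<Rightarrow> ('a \<times> 'a) set \<Rightarrow>
   ('b \<Rightarrow> 'a set) \<Rightarrow> ('b \<Rightarrow> ('a \<times> 'a) set) \<Rightarrow> (('b \<times> 'b) \<Rightarrow> ('a \<times> 'a)) \<Rightarrow> bool" where
  "directed_model VH EH V E B A d \<longleftrightarrow>
     (\<forall>v\<in>VH. B v \<subseteq> V \<and> A v \<subseteq> E \<inter> (B v \<times> B v))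
   \<and> (\<forall>u\<in>VH. \<forall>v\<in>VH. u \<noteq> v \<longrightarrow> B u \<inter> B v = {})
   \<and> (\<forall>e\<in>EH. d e \<in> E \<and> fst (d e) \<in> B (fst e) \<and> snd (d e) \<in> B (snd e))
   \<and> (\<forall>v\<in>VH.
        (\<forall>x\<in>in_verts EH d (B v) v. \<forall>y\<in>out_verts EH d (B v) v. path_in (B v) (A v) x y)
      \<and> (\<exists>z\<in>B v. \<forall>y\<in>out_verts EH d (B v) v. path_in (B v) (A v) z y)
      \<and> (\<exists>z\<in>B v. \<forall>x\<in>in_verts EH d (B v) v. path_in (B v) (A v) x z))"

definition depth_minor :: "nat \<Rightarrow> 'b set \<Rightarrow> ('b \<times> 'b) set \<Rightarrow> 'a set \<Rightarrow> ('a \<times> 'a) set \<Rightarrow> bool" where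
  "depth_minor r VH EH V E \<longleftrightarrow>
     (\<exists>B A d. directed_model VH EH V E B A d
        \<and> (\<forall>v\<in>VH. \<forall>p. dipath (A v) p \<and> set p \<subseteq> B v \<longrightarrow> length p - 1 \<le> r))"

text \<open>The crown S_K: vertices v_i = Inl i (1 \<le> i \<le> K) and v_ij = Inr (i,j)
  (1 \<le> i < j \<le> K), arcs (v_ij, v_i), (v_ij, v_j).\<close>
definition crown_pairs :: "nat \<Rightarrow> (nat \<times> nat) set" where
  "crown_pairs K = {(i, j). 1 \<le> i \<and> i < j \<and> j \<le> K}"

definition crown_V :: "nat \<Rightarrow> (nat + nat \<times> nat) set" where
  "crown_V K = Inl ` {1..K} \<union> Inr ` crown_pairs K"

definition crown_E :: "nat \<Rightarrow> ((nat + nat \<times> nat) \<times> (nat + nat \<times> nat)) set" where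
  "crown_E K = (\<Union>(i, j)\<in>crown_pairs K. {(Inr (i, j), Inl i), (Inr (i, j), Inl j)})"

end

theory Submission
  imports Defs "HOL-Library.Ramsey"
begin


fun wk :: "('a \<times> 'a) set \<Rightarrow> nat \<Rightarrow> 'a \<Rightarrow> 'a \<Rightarrow> bool" where
  "wk E 0 x y = (x = y)"
| "wk E (Suc k) x y = (x = y \<or> (\<exists>w. (x, w) \<in> E \<and> wk E k w y))"

lemma wk_refl[simp]: "wk E k x x"
  by (cases k) auto

lemma wk_mono: "wk E k x y \<Longrightarrow> k \<le> k' \<Longrightarrow> wk E k' x y"
proof (induction k arbitrary: k' x)
  case 0 then show ?case by simp
next
  case (Suc k)
  then obtain k'' where k': "k' = Suc k''" "k \<le> k''" by (cases k') auto
  from Suc show ?case unfolding k' by auto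
qed

lemma wk_step: "(x, w) \<in> E \<Longrightarrow> wk E k w y \<Longrightarrow> wk E (Suc k) x y"
  by auto

lemma wk_trans: "wk E k x y \<Longrightarrow> wk E l y z \<Longrightarrow> wk E (k + l) x z"
proof (induction k arbitrary: x)
  case 0 then show ?case by simp
next
  case (Suc k)
  show ?case
  proof (cases "x = y")
    case True then show ?thesis using Suc.prems wk_mono[of E l y z "Suc k + l"] by simp
  next
    case False
    then obtain w where "(x,w) \<in> E" "wk E k w y" using Suc.prems by auto
    then show ?thesis using Suc.IH[of w] Suc.prems by auto
  qed
qed

lemma wk_snoc: "wk E k x w \<Longrightarrow> (w, y) \<in> E \<Longrightarrow> wk E (Suc k) x y"
  using wk_trans[of E k x w 1 y] by auto

lemma wk_last: "wk E (Suc k) x y \<Longrightarrow> x = y \<or> (\<exists>w. wk E k x w \<and> (w, y) \<in> E)"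
proof (induction k arbitrary: x)
  case 0 then show ?case by auto
next
  case (Suc k)
  show ?case
  proof (cases "x = y")
    case False
    then obtain w where w: "(x,w) \<in> E" "wk E (Suc k) w y" using Suc.prems by auto
    from Suc.IH[OF w(2)] show ?thesis
    proof
      assume "w = y" then show ?thesis using w by (intro disjI2 exI[of _ x]) auto
    next
      assume "\<exists>w'. wk E k w w' \<and> (w', y) \<in> E"
      then obtain w' where "wk E k w w'" "(w', y) \<in> E" by blast
      then show ?thesis using w by (intro disjI2 exI[of _ w']) auto
    qed
  qed simp
qed

lemma wk_V: "wk E k x y \<Longrightarrow> E \<subseteq> V \<times> V \<Longrightarrow> x \<in> V \<Longrightarrow> y \<in> V"
  by (induction k arbitrary: x) auto

lemma dipath_wk: "dipath E p \<Longrightarrow> wk E (length p - 1) (hd p) (last p)"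
proof (induction p)
  case Nil then show ?case by (simp add: dipath_def)
next
  case (Cons x p)
  show ?case
  proof (cases p)
    case Nil then show ?thesis by simp
  next
    case (Cons y q)
    have "dipath E p" using Cons.prems unfolding dipath_def Cons by auto
    moreover have "(x, y) \<in> E" using Cons.prems unfolding dipath_def Cons by auto
    ultimately show ?thesis using Cons.IH Cons by auto
  qed
qed

lemma path_le_wk: "path_le E r s t \<Longrightarrow> wk E r s t"
  unfolding path_le_def using dipath_wk wk_mono by metis

fun Mb :: "nat \<Rightarrow> nat \<Rightarrow> nat" where
  "Mb c 0 = 1"
| "Mb c (Suc k) = 1 + c * Mb c k"

lemma wk_V': "wk E k x y \<Longrightarrow> E \<subseteq> V \<times> V \<Longrightarrow> y = x \<or> y \<in> V"
proof (induction k arbitrary: x)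
  case 0 then show ?case by simp
next
  case (Suc k)
  show ?case
  proof (cases "x = y")
    case False
    then obtain w where w: "(x, w) \<in> E" "wk E k w y" using Suc.prems(1) by auto
    have "w \<in> V" using w(1) Suc.prems(2) by blast
    then show ?thesis using Suc.IH[OF w(2) Suc.prems(2)] by blast
  qed simp
qed

lemma ball_sub: "E \<subseteq> V \<times> V \<Longrightarrow> {y. wk E k x y} \<subseteq> insert x V"
proof
  fix y assume "E \<subseteq> V \<times> V" "y \<in> {y. wk E k x y}"
  then show "y \<in> insert x V" using wk_V'[of E k x y V] by blast
qed

lemma ball_card:
  assumes "digraph V E" "max_outdeg_le V E c"
  shows "finite {y. wk E k x y} \<and> card {y. wk E k x y} \<le> Mb c k"
proof (induction k arbitrary: x)
  case 0 then show ?case by simp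
next
  case (Suc k)
  have fV: "finite V" "E \<subseteq> V \<times> V" using assms(1) unfolding digraph_def by auto
  let ?N = "{w. (x, w) \<in> E}"
  have eq: "{y. wk E (Suc k) x y} = insert x (\<Union>w\<in>?N. {y. wk E k w y})" by auto
  have fN: "finite ?N" by (rule finite_subset[of _ V]) (use fV in auto)
  have cN: "card ?N \<le> c"
  proof (cases "x \<in> V")
    case True then show ?thesis using assms(2) unfolding max_outdeg_le_def by auto
  next
    case False then have "?N = {}" using fV by auto
    then show ?thesis by simp
  qed
  have "card (\<Union>w\<in>?N. {y. wk E k w y}) \<le> (\<Sum>w\<in>?N. card {y. wk E k w y})"
    by (rule card_UN_le[OF fN])
  also have "\<dots> \<le> (\<Sum>w\<in>?N. Mb c k)" by (rule sum_mono) (use Suc in auto)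
  also have "\<dots> \<le> c * Mb c k" using cN by simp
  finally have "card (\<Union>w\<in>?N. {y. wk E k w y}) \<le> c * Mb c k" .
  moreover have "finite (\<Union>w\<in>?N. {y. wk E k w y})" using fN Suc by auto
  ultimately show ?case unfolding eq using card_insert_le[of _ x]
    by (auto intro: le_trans[OF card_insert_le_m1] simp: card_insert_if)
qed

definition dst :: "('a \<times> 'a) set \<Rightarrow> 'a \<Rightarrow> 'a \<Rightarrow> nat" where
  "dst E x y = (LEAST k. wk E k x y)"

lemma dst_wk: "wk E k x y \<Longrightarrow> wk E (dst E x y) x y"
  unfolding dst_def by (rule LeastI)

lemma dst_le: "wk E k x y \<Longrightarrow> dst E x y \<le> k"
  unfolding dst_def by (rule Least_le)

lemma dst_self[simp]: "dst E x x = 0"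
  using dst_le[of E 0 x x] by simp

lemma dst_0: "wk E k x y \<Longrightarrow> dst E x y = 0 \<Longrightarrow> x = y"
  using dst_wk[of E k x y] by simp

lemma dst_tri: "wk E k x y \<Longrightarrow> wk E l y z \<Longrightarrow> dst E x z \<le> dst E x y + dst E y z"
  by (rule dst_le, rule wk_trans[OF dst_wk dst_wk])

lemma dst_edge: "(x, w) \<in> E \<Longrightarrow> wk E k w y \<Longrightarrow> dst E x y \<le> Suc (dst E w y)"
  by (rule dst_le, rule wk_step[OF _ dst_wk])

lemma dst_edge': "wk E k x w \<Longrightarrow> (w, y) \<in> E \<Longrightarrow> dst E x y \<le> Suc (dst E x w)"
  by (rule dst_le, rule wk_snoc[OF dst_wk])

lemma dst_succ:
  assumes "wk E k x y" "dst E x y = Suc m"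
  shows "\<exists>w. (x, w) \<in> E \<and> wk E m w y \<and> dst E w y = m"
proof -
  have "wk E (Suc m) x y" using dst_wk[OF assms(1)] assms(2) by simp
  moreover have "x \<noteq> y" using assms(2) by auto
  ultimately obtain w where w: "(x,w) \<in> E" "wk E m w y" by auto
  have "dst E w y \<le> m" using dst_le[OF w(2)] .
  moreover have "Suc m \<le> Suc (dst E w y)" using dst_edge[OF w] assms(2) by simp
  ultimately show ?thesis using w by auto
qed

lemma dst_pred:
  assumes "wk E k x y" "dst E x y = Suc m"
  shows "\<exists>w. (w, y) \<in> E \<and> wk E m x w \<and> dst E x w = m"
proof -
  have ws: "wk E (Suc m) x y" using dst_wk[OF assms(1)] unfolding assms(2) .
  have "x \<noteq> y" using assms(2) by auto
  then obtain w where w: "wk E m x w" "(w,y) \<in> E" using wk_last[OF ws] by blast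
  have "dst E x w \<le> m" using dst_le[OF w(1)] .
  moreover have "Suc m \<le> Suc (dst E x w)" using dst_edge'[OF w] assms(2) by simp
  ultimately show ?thesis using w by auto
qed

lemma succ_incr_last:
  "successively (\<lambda>x y. f y = Suc (f x)) p \<Longrightarrow> p \<noteq> [] \<Longrightarrow>
    f (last p) = f (hd p) + (length p - 1) \<and> (\<forall>y\<in>set (tl p). f (hd p) < f y)"
proof (induction p)
  case Nil then show ?case by simp
next
  case (Cons x p)
  then show ?case by (cases p) (fastforce simp: successively_Cons)+
qed

lemma succ_incr_distinct:
  "successively (\<lambda>x y. f y = Suc (f x)) p \<Longrightarrow> distinct p"
proof (induction p)
  case Nil then show ?case by simp
next
  case (Cons x p)
  show ?case
  proof (cases p)
    case Nil then show ?thesis by simp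
  next
    case (Cons y q)
    have s: "successively (\<lambda>x y. f y = Suc (f x)) p" using Cons.prems \<open>p = y # q\<close> by simp
    have "\<forall>z\<in>set p. f x < f z"
      using succ_incr_last[OF s] Cons Cons.prems by auto
    then have "x \<notin> set p" by auto
    then show ?thesis using Cons.IH s by simp
  qed
qed



lemma min3: "(a::nat) < b \<Longrightarrow> b < c \<Longrightarrow> Min {a,b,c} = a \<and> Max {a,b,c} = c \<and> Min ({a,b,c} - {a}) = b"
proof -
  assume "a < b" "b < c"
  moreover have "{a,b,c} - {a} = {b,c}" using \<open>a<b\<close> \<open>b<c\<close> by auto
  ultimately show ?thesis by (simp add: min_def max_def)
qed

lemma three_in_nsets: "(a::nat) < b \<Longrightarrow> b < c \<Longrightarrow> a \<in> H \<Longrightarrow> b \<in> H \<Longrightarrow> c \<in> H \<Longrightarrow> {a,b,c} \<in> nsets H 3"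
  by (auto simp: nsets_def card_insert_if)

lemma card_bound_aux:
  assumes "finite H" "card H = m" "a \<in> H" "b \<in> H" "a \<noteq> b"
    "H - {a,b} \<subseteq> A" "finite Z" "card Z \<le> L" "inj_on t H" "t ` A' \<subseteq> Z" "A = A' \<inter> H"
  shows "m \<le> L + 2"
proof -
  have "card (H - {a,b}) = m - 2" using assms by (simp add: card_Diff_subset)
  have "H - {a,b} \<subseteq> A'" using assms by auto
  then have "t ` (H - {a,b}) \<subseteq> Z" using assms by auto
  then have "card (t ` (H - {a,b})) \<le> L" using assms card_mono le_trans by metis
  moreover have "card (t ` (H - {a,b})) = card (H - {a,b})"
    using assms(9) by (auto intro: card_image inj_on_subset)
  ultimately show ?thesis using \<open>card (H - {a,b}) = m - 2\<close> by simp
qed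

lemma select:
  fixes K L :: nat
  shows "\<exists>N::nat. \<forall>(T::'a set) Bad Rch. finite T \<and> card T \<ge> N
     \<and> (\<forall>u w. finite (Bad u w) \<and> card (Bad u w) \<le> L \<and> Bad u w = Bad w u)
     \<and> (\<forall>u. finite (Rch u) \<and> card (Rch u) \<le> L)
     \<longrightarrow> (\<exists>X\<subseteq>T. card X = K \<and> (\<forall>u\<in>X. \<forall>w\<in>X. \<forall>z\<in>X. u \<noteq> w \<and> z \<noteq> u \<and> z \<noteq> w \<longrightarrow> z \<notin> Bad u w)
            \<and> (\<forall>u\<in>X. \<forall>w\<in>X. u \<noteq> w \<longrightarrow> w \<notin> Rch u))"
proof -
  define m where "m = K + L + 4"
  obtain N :: nat where N: "partn_lst {..<N} (replicate 6 m) 3" using ramsey_full[of "replicate 6 m" 3] by blast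
  show ?thesis
  proof (rule exI[of _ N], intro allI impI, elim conjE)
    fix T :: "'a set" and Bad :: "'a \<Rightarrow> 'a \<Rightarrow> 'a set" and Rch :: "'a \<Rightarrow> 'a set"
    assume fT: "finite T" and cT: "N \<le> card T"
      and hB: "\<forall>u w. finite (Bad u w) \<and> card (Bad u w) \<le> L \<and> Bad u w = Bad w u"
      and hR: "\<forall>u. finite (Rch u) \<and> card (Rch u) \<le> L"
    obtain T' where T': "T' \<subseteq> T" "card T' = N" "finite T'" using obtain_subset_with_card_n[OF cT] by blast
    obtain t where bt: "bij_betw t {0..<N} T'" using ex_bij_betw_nat_finite[OF T'(3)] T'(2) by auto
    have tinj: "inj_on t {..<N}" and tim: "t ` {..<N} = T'" using bt by (auto simp: bij_betw_def atLeast0LessThan)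
    define f where "f S = (let a = Min S; c = Max S; b = Min (S - {a}) in
       if t a \<in> Bad (t b) (t c) then 1 else if t b \<in> Bad (t a) (t c) then 2
       else if t c \<in> Bad (t a) (t b) then 3 else if t b \<in> Rch (t a) then 4
       else if t a \<in> Rch (t b) then (5::nat) else 0)" for S
    have "f \<in> nsets {..<N} 3 \<rightarrow> {..<length (replicate 6 m)}" unfolding f_def by (auto simp: Let_def)
    then obtain i where i: "i < 6" "monochromatic {..<N} m 3 f i"
      using N unfolding partn_lst_def by auto
    then obtain H where H: "H \<in> nsets {..<N} m" "f ` nsets H 3 \<subseteq> {i}"
      unfolding monochromatic_def by auto
    have Hsub: "H \<subseteq> {..<N}" and fH: "finite H" and cH: "card H = m" using H(1) by (auto simp: nsets_def)
    have tinjH: "inj_on t H" using tinj Hsub inj_on_subset by blast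
    have col: "f {a,b,c} = i" if "a < b" "b < c" "a \<in> H" "b \<in> H" "c \<in> H" for a b c
      using H(2) three_in_nsets[OF that] by auto
    have fv: "f {a,b,c} = (if t a \<in> Bad (t b) (t c) then 1 else if t b \<in> Bad (t a) (t c) then 2
       else if t c \<in> Bad (t a) (t b) then 3 else if t b \<in> Rch (t a) then 4
       else if t a \<in> Rch (t b) then (5::nat) else 0)" if "a < b" "b < c" for a b c
      using min3[OF that] unfolding f_def by (simp add: Let_def)
    have Hne: "H \<noteq> {}" using cH m_def by auto
    define c0 where "c0 = Max H"
    define b0 where "b0 = Max (H - {c0})"
    define a0 where "a0 = Min H"
    define a1 where "a1 = Min (H - {a0})"
    have c0H: "c0 \<in> H" unfolding c0_def by (rule Max_in[OF fH Hne])
    have cHc0: "card (H - {c0}) = m - 1" using c0H fH cH by (simp add: card_Diff_singleton)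
    have H2: "H - {c0} \<noteq> {}"
    proof
      assume "H - {c0} = {}"
      then have "card (H - {c0}) = 0" using card.empty by metis
      then show False using cHc0 m_def by simp
    qed
    have b0H: "b0 \<in> H - {c0}" unfolding b0_def by (rule Max_in) (use fH H2 in auto)
    have a0H: "a0 \<in> H" unfolding a0_def by (rule Min_in[OF fH Hne])
    have cHa0: "card (H - {a0}) = m - 1" using a0H fH cH by (simp add: card_Diff_singleton)
    have H3: "H - {a0} \<noteq> {}"
    proof
      assume "H - {a0} = {}"
      then have "card (H - {a0}) = 0" using card.empty by metis
      then show False using cHa0 m_def by simp
    qed
    have a1H: "a1 \<in> H - {a0}" unfolding a1_def by (rule Min_in) (use fH H3 in auto)
    have lc0: "x \<le> c0" if "x \<in> H" for x unfolding c0_def by (rule Max_ge[OF fH that])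
    have lb0: "x \<le> b0" if "x \<in> H - {c0}" for x unfolding b0_def by (rule Max_ge) (use fH that in auto)
    have la0: "a0 \<le> x" if "x \<in> H" for x unfolding a0_def by (rule Min_le[OF fH that])
    have la1: "a1 \<le> x" if "x \<in> H - {a0}" for x unfolding a1_def by (rule Min_le) (use fH that in auto)
    have b0c0: "b0 < c0" using b0H lc0 by force
    have a0a1: "a0 < a1" using a1H la0 by force
    have a0c0: "a0 < c0" using a0a1 a1H lc0 by force
    have mL: "\<not> m \<le> L + 2" using m_def by simp
    have bound: "False" if "a \<in> H" "b \<in> H" "a \<noteq> b" "\<forall>x\<in>H - {a,b}. t x \<in> Z" "finite Z" "card Z \<le> L"
      for a b Z
    proof -
      have c2: "card (H - {a,b}) = m - 2" using that(1-3) fH cH by (simp add: card_Diff_subset)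
      have "t ` (H - {a,b}) \<subseteq> Z" using that(4) by blast
      then have "card (t ` (H - {a,b})) \<le> card Z" by (rule card_mono[OF that(5)])
      moreover have "card (t ` (H - {a,b})) = card (H - {a,b})"
        by (rule card_image) (rule inj_on_subset[OF tinjH], blast)
      ultimately have "m - 2 \<le> L" using c2 that(6) by linarith
      then show False using mL by linarith
    qed
    have b0H': "b0 \<in> H" "b0 \<noteq> c0" using b0H by auto
    have a1H': "a1 \<in> H" "a1 \<noteq> a0" using a1H by auto
    have a0c0': "a0 \<noteq> c0" using a0c0 by simp
    have "i = 0"
    proof (rule ccontr)
      assume "i \<noteq> 0"
      then consider "i = 1" | "i = 2" | "i = 3" | "i = 4" | "i = 5" using i(1) by linarith
      then show False
      proof cases
        case 1
        have "\<forall>x\<in>H - {b0, c0}. t x \<in> Bad (t b0) (t c0)"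
        proof
          fix x assume x: "x \<in> H - {b0, c0}"
          then have xH: "x \<in> H" by blast
          have "x \<le> b0" using lb0 x by blast
          then have lt: "x < b0" using x by auto
          have "f {x,b0,c0} = 1" using col[OF lt b0c0 xH b0H'(1) c0H] 1 by simp
          then show "t x \<in> Bad (t b0) (t c0)" unfolding fv[OF lt b0c0] by (auto split: if_splits)
        qed
        then show False using bound[OF b0H'(1) c0H b0H'(2)] hB by blast
      next
        case 2
        have "\<forall>x\<in>H - {a0, c0}. t x \<in> Bad (t a0) (t c0)"
        proof
          fix x assume x: "x \<in> H - {a0, c0}"
          then have xH: "x \<in> H" by blast
          have "a0 \<le> x" "x \<le> c0" using la0 lc0 xH by blast+
          then have lt: "a0 < x" "x < c0" using x by auto
          have "f {a0,x,c0} = 2" using col[OF lt a0H xH c0H] 2 by simp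
          then show "t x \<in> Bad (t a0) (t c0)" unfolding fv[OF lt] by (auto split: if_splits)
        qed
        then show False using bound[OF a0H c0H a0c0'] hB by blast
      next
        case 3
        have "\<forall>x\<in>H - {a0, a1}. t x \<in> Bad (t a0) (t a1)"
        proof
          fix x assume x: "x \<in> H - {a0, a1}"
          then have xH: "x \<in> H" by blast
          have "a1 \<le> x" using la1 x by blast
          then have lt: "a1 < x" using x by auto
          have "f {a0,a1,x} = 3" using col[OF a0a1 lt a0H a1H'(1) xH] 3 by simp
          then show "t x \<in> Bad (t a0) (t a1)" unfolding fv[OF a0a1 lt] by (auto split: if_splits)
        qed
        then show False using bound[OF a0H a1H'(1) a1H'(2)[symmetric]] hB by blast
      next
        case 4
        have "\<forall>x\<in>H - {a0, c0}. t x \<in> Rch (t a0)"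
        proof
          fix x assume x: "x \<in> H - {a0, c0}"
          then have xH: "x \<in> H" by blast
          have "a0 \<le> x" "x \<le> c0" using la0 lc0 xH by blast+
          then have lt: "a0 < x" "x < c0" using x by auto
          have "f {a0,x,c0} = 4" using col[OF lt a0H xH c0H] 4 by simp
          then show "t x \<in> Rch (t a0)" unfolding fv[OF lt] by (auto split: if_splits)
        qed
        then show False using bound[OF a0H c0H a0c0'] hR by blast
      next
        case 5
        have "\<forall>x\<in>H - {b0, c0}. t x \<in> Rch (t b0)"
        proof
          fix x assume x: "x \<in> H - {b0, c0}"
          then have xH: "x \<in> H" by blast
          have "x \<le> b0" using lb0 x by blast
          then have lt: "x < b0" using x by auto
          have "f {x,b0,c0} = 5" using col[OF lt b0c0 xH b0H'(1) c0H] 5 by simp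
          then show "t x \<in> Rch (t b0)" unfolding fv[OF lt b0c0] by (auto split: if_splits)
        qed
        then show False using bound[OF b0H'(1) c0H b0H'(2)] hR by blast
      qed
    qed
    have good: "\<not> t a \<in> Bad (t b) (t c) \<and> \<not> t b \<in> Bad (t a) (t c) \<and> \<not> t c \<in> Bad (t a) (t b)
        \<and> \<not> t b \<in> Rch (t a) \<and> \<not> t a \<in> Rch (t b)"
      if "a < b" "b < c" "a \<in> H" "b \<in> H" "c \<in> H" for a b c
      using col[OF that] fv[OF that(1,2)] \<open>i = 0\<close> by (auto split: if_splits)
    have "K \<le> card (H - {c0})" using cH m_def c0H fH by simp
    then obtain H' where H': "H' \<subseteq> H - {c0}" "card H' = K" "finite H'"
      using obtain_subset_with_card_n by metis
    show "\<exists>X\<subseteq>T. card X = K \<and> (\<forall>u\<in>X. \<forall>w\<in>X. \<forall>z\<in>X. u \<noteq> w \<and> z \<noteq> u \<and> z \<noteq> w \<longrightarrow> z \<notin> Bad u w)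
            \<and> (\<forall>u\<in>X. \<forall>w\<in>X. u \<noteq> w \<longrightarrow> w \<notin> Rch u)"
    proof (intro exI[of _ "t ` H'"] conjI ballI impI)
      show "t ` H' \<subseteq> T" using H'(1) Hsub tim T'(1) by auto
      show "card (t ` H') = K" using H' tinjH card_image inj_on_subset by (metis Diff_subset order_trans)
    next
      fix u w z assume "u \<in> t ` H'" "w \<in> t ` H'" "z \<in> t ` H'" and d: "u \<noteq> w \<and> z \<noteq> u \<and> z \<noteq> w"
      then obtain x y v where xyv: "x \<in> H" "y \<in> H" "v \<in> H" "u = t x" "w = t y" "z = t v"
        using H'(1) by blast
      then have "x \<noteq> y" "v \<noteq> x" "v \<noteq> y" using d by auto
      then consider "x < y" "y < v" | "x < v" "v < y" | "y < x" "x < v" | "y < v" "v < x"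
        | "v < x" "x < y" | "v < y" "y < x" by linarith
      then have "\<not> t v \<in> Bad (t x) (t y) \<or> \<not> t v \<in> Bad (t y) (t x)"
      proof cases
        case 1 then show ?thesis using good[of x y v] xyv by blast
      next
        case 2 then show ?thesis using good[of x v y] xyv by blast
      next
        case 3 then show ?thesis using good[of y x v] xyv by blast
      next
        case 4 then show ?thesis using good[of y v x] xyv by blast
      next
        case 5 then show ?thesis using good[of v x y] xyv by blast
      next
        case 6 then show ?thesis using good[of v y x] xyv by blast
      qed
      moreover have sym: "Bad (t y) (t x) = Bad (t x) (t y)" using hB by blast
      ultimately show "z \<notin> Bad u w" using xyv(4-6) by auto
    next
      fix u w assume "u \<in> t ` H'" "w \<in> t ` H'" "u \<noteq> w"
      then obtain x y where xy: "x \<in> H - {c0}" "y \<in> H - {c0}" "u = t x" "w = t y"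
        using H'(1) by blast
      have "x < c0" "y < c0" using xy lc0 by force+
      have "x \<noteq> y" using xy \<open>u \<noteq> w\<close> by auto
      then consider "x < y" | "y < x" by linarith
      then show "w \<notin> Rch u"
        by cases (use good xy c0H \<open>x < c0\<close> \<open>y < c0\<close> in auto)
    qed
  qed
qed



declare wk.simps(2)[simp del]

definition geo :: "('a \<times> 'a) set \<Rightarrow> 'a \<Rightarrow> 'a \<Rightarrow> 'a set" where
  "geo E s a = {y. wk E (dst E s a) s y \<and> wk E (dst E s a) y a \<and> dst E s y + dst E y a = dst E s a}"

lemma geo_basic:
  assumes "y \<in> geo E s a" "wk E r s a"
  shows "wk E r s y \<and> wk E r y a \<and> dst E s y \<le> r \<and> dst E y a \<le> r"
proof -
  have d: "dst E s a \<le> r" using dst_le[OF assms(2)] .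
  have g: "wk E (dst E s a) s y" "wk E (dst E s a) y a" "dst E s y + dst E y a = dst E s a"
    using assms(1) unfolding geo_def by auto
  have 1: "wk E r s y" by (rule wk_mono[OF g(1) d])
  have 2: "wk E r y a" by (rule wk_mono[OF g(2) d])
  have 3: "dst E s y \<le> r" "dst E y a \<le> r" using g(3) d by linarith+
  show ?thesis using 1 2 3 by blast
qed

lemma geo_G:
  assumes "y \<in> geo E s b" "wk E r s b"
  shows "wk E (r - dst E s y) y b"
proof -
  have d: "dst E s b \<le> r" using dst_le[OF assms(2)] .
  have g: "wk E (dst E s b) y b" "dst E s y + dst E y b = dst E s b"
    using assms(1) unfolding geo_def by auto
  have w: "wk E (dst E y b) y b" by (rule dst_wk[OF g(1)])
  have "dst E y b \<le> r - dst E s y" using g(2) d by linarith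
  then show ?thesis by (rule wk_mono[OF w])
qed

lemma geo_s: "wk E r s a \<Longrightarrow> s \<in> geo E s a"
  unfolding geo_def using dst_wk[of E r s a] by simp

lemma geo_a: "wk E r s a \<Longrightarrow> a \<in> geo E s a"
  unfolding geo_def using dst_wk[of E r s a] by simp

lemma geo_succ:
  assumes "y \<in> geo E s a" "y \<noteq> a"
  shows "\<exists>y'. (y, y') \<in> E \<and> y' \<in> geo E s a \<and> dst E s y' = Suc (dst E s y) \<and> Suc (dst E y' a) = dst E y a"
proof -
  have g: "wk E (dst E s a) s y" "wk E (dst E s a) y a" "dst E s y + dst E y a = dst E s a"
    using assms(1) unfolding geo_def by auto
  have "dst E y a \<noteq> 0" using dst_0[OF g(2)] assms(2) by auto
  then obtain m where m: "dst E y a = Suc m" by (cases "dst E y a") auto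
  obtain y' where y': "(y, y') \<in> E" "wk E m y' a" "dst E y' a = m" using dst_succ[OF g(2) m] by blast
  have wsy: "wk E (dst E s y) s y" using dst_wk[OF g(1)] .
  have wsy': "wk E (Suc (dst E s y)) s y'" using wk_snoc[OF wsy y'(1)] .
  have "dst E s y' \<le> Suc (dst E s y)" using dst_le[OF wsy'] .
  moreover have "dst E s a \<le> dst E s y' + dst E y' a" using dst_tri[OF wsy' y'(2)] .
  ultimately have e: "dst E s y' = Suc (dst E s y)" using g(3) m y'(3) by linarith
  have le1: "dst E s y' \<le> dst E s a" "m \<le> dst E s a" using e g(3) m y'(3) by linarith+
  have "wk E (dst E s a) s y'" by (rule wk_mono[OF dst_wk[OF wsy'] le1(1)])
  moreover have "wk E (dst E s a) y' a" by (rule wk_mono[OF y'(2) le1(2)])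
  moreover have "dst E s y' + dst E y' a = dst E s a" using e g(3) m y'(3) by linarith
  ultimately have "y' \<in> geo E s a" unfolding geo_def by blast
  then show ?thesis using y' e m by (intro exI[of _ y']) simp
qed

lemma geo_pred:
  assumes "y \<in> geo E s a" "y \<noteq> s"
  shows "\<exists>w. (w, y) \<in> E \<and> w \<in> geo E s a \<and> dst E s y = Suc (dst E s w)"
proof -
  have g: "wk E (dst E s a) s y" "wk E (dst E s a) y a" "dst E s y + dst E y a = dst E s a"
    using assms(1) unfolding geo_def by auto
  have "dst E s y \<noteq> 0" using dst_0[OF g(1)] assms(2) by auto
  then obtain m where m: "dst E s y = Suc m" by (cases "dst E s y") auto
  obtain w where w: "(w, y) \<in> E" "wk E m s w" "dst E s w = m" using dst_pred[OF g(1) m] by blast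
  have wya: "wk E (dst E y a) y a" using dst_wk[OF g(2)] .
  have wwa: "wk E (Suc (dst E y a)) w a" using wk_step[OF w(1) wya] .
  have "dst E w a \<le> Suc (dst E y a)" using dst_le[OF wwa] .
  moreover have "dst E s a \<le> dst E s w + dst E w a" using dst_tri[OF w(2) wwa] .
  ultimately have e: "dst E w a = Suc (dst E y a)" using g(3) m w(3) by linarith
  have le1: "m \<le> dst E s a" "dst E w a \<le> dst E s a" using e g(3) m w(3) by linarith+
  have "wk E (dst E s a) s w" by (rule wk_mono[OF w(2) le1(1)])
  moreover have "wk E (dst E s a) w a" by (rule wk_mono[OF dst_wk[OF wwa] le1(2)])
  moreover have "dst E s w + dst E w a = dst E s a" using e g(3) m w(3) by linarith
  ultimately have "w \<in> geo E s a" unfolding geo_def by blast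
  then show ?thesis using w m by (intro exI[of _ w]) simp
qed

lemma bridge:
  assumes "wk E r s a" "wk E r s b" "\<not> wk E r a b"
  shows "\<exists>x x'. (x, x') \<in> E \<and> x \<in> geo E s a \<and> wk E (r - dst E s x) x b
     \<and> x' \<in> geo E s a \<and> \<not> wk E (r - dst E s x') x' b"
proof -
  have main: "\<forall>y. y \<in> geo E s a \<and> wk E (r - dst E s y) y b \<and> dst E y a = n \<longrightarrow>
     (\<exists>x x'. (x, x') \<in> E \<and> x \<in> geo E s a \<and> wk E (r - dst E s x) x b
     \<and> x' \<in> geo E s a \<and> \<not> wk E (r - dst E s x') x' b)" for n
  proof (induction n rule: less_induct)
    case (less n)
    show ?case
    proof (intro allI impI, elim conjE)
      fix y assume y: "y \<in> geo E s a" "wk E (r - dst E s y) y b" "dst E y a = n"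
      have "wk E r y b" by (rule wk_mono[OF y(2) diff_le_self])
      then have "y \<noteq> a" using assms(3) by blast
      obtain y' where y'c: "(y, y') \<in> E \<and> y' \<in> geo E s a \<and> dst E s y' = Suc (dst E s y) \<and> Suc (dst E y' a) = dst E y a"
        using geo_succ[OF y(1) \<open>y \<noteq> a\<close>] ..
      have y': "(y, y') \<in> E" "y' \<in> geo E s a" "dst E s y' = Suc (dst E s y)" "Suc (dst E y' a) = dst E y a"
        using y'c by simp_all
      show "\<exists>x x'. (x, x') \<in> E \<and> x \<in> geo E s a \<and> wk E (r - dst E s x) x b
        \<and> x' \<in> geo E s a \<and> \<not> wk E (r - dst E s x') x' b"
      proof (cases "wk E (r - dst E s y') y' b")
        case True
        have lt: "dst E y' a < n" using y'(4) y(3) by simp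
        have hyp: "y' \<in> geo E s a \<and> wk E (r - dst E s y') y' b \<and> dst E y' a = dst E y' a"
          using y'(2) True by simp
        show ?thesis by (rule mp[OF spec[where x=y', OF less.IH[OF lt]] hyp])
      next
        case False then show ?thesis by (intro exI[of _ y] exI[of _ y'] conjI) (rule y' y False)+
      qed
    qed
  qed
  have "wk E (r - dst E s s) s b" using assms(2) by simp
  then show ?thesis using main[of "dst E s a"] geo_s[OF assms(1)] by blast
qed

lemma succ_mono:
  assumes "\<And>x y. x \<in> C \<Longrightarrow> y \<in> C \<Longrightarrow> P x y \<Longrightarrow> Q x y"
  shows "successively P p \<Longrightarrow> set p \<subseteq> C \<Longrightarrow> successively Q p"
proof (induction p)
  case Nil then show ?case by simp
next
  case (Cons x p)
  show ?case
  proof (cases p)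
    case Nil then show ?thesis by simp
  next
    case (Cons y q)
    have 1: "P x y" "successively P p" using Cons.prems(1) \<open>p = y # q\<close> by simp_all
    have 2: "x \<in> C" "y \<in> C" "set p \<subseteq> C" using Cons.prems(2) \<open>p = y # q\<close> by auto
    have "Q x y" by (rule assms[OF 2(1,2) 1(1)])
    moreover have "successively Q p" by (rule Cons.IH[OF 1(2) 2(3)])
    ultimately show ?thesis using \<open>p = y # q\<close> by simp
  qed
qed

lemma succ_decr_last:
  "successively (\<lambda>x y. f x = Suc (f y)) p \<Longrightarrow> p \<noteq> [] \<Longrightarrow>
    f (hd p) = f (last p) + (length p - 1) \<and> (\<forall>y\<in>set (tl p). f y < f (hd p))"
proof (induction p)
  case Nil then show ?case by simp
next
  case (Cons x p)
  note Cp = Cons.prems and CIH = Cons.IH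
  show ?case
  proof (cases p)
    case Nil then show ?thesis by simp
  next
    case (Cons y q)
    have 1: "f x = Suc (f y)" "successively (\<lambda>x y. f x = Suc (f y)) p" using Cp(1) \<open>p = y # q\<close> by simp_all
    have hp: "hd p = y" "tl p = q" "p \<noteq> []" using \<open>p = y # q\<close> by simp_all
    have IH0: "f (hd p) = f (last p) + (length p - 1) \<and> (\<forall>z\<in>set (tl p). f z < f (hd p))"
      by (rule CIH[OF 1(2) hp(3)])
    then have IH: "f y = f (last p) + (length p - 1)" "\<forall>z\<in>set q. f z < f y"
      unfolding hp(1,2) by blast+
    have "\<forall>z\<in>set p. f z < f x" using IH(2) 1(1) \<open>p = y # q\<close> by auto
    moreover have "f x = f (last (x # p)) + (length (x # p) - 1)"
    proof -
      have l: "last (x # p) = last p" "length (x # p) - 1 = length p" "length p \<ge> 1"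
        using \<open>p = y # q\<close> by simp_all
      show ?thesis unfolding l(1,2) using IH(1) 1(1) l(3) by linarith
    qed
    ultimately show ?thesis unfolding list.sel(1) list.sel(3) by blast
  qed
qed
lemma succ_decr_distinct:
  "successively (\<lambda>x y. f x = Suc (f y)) p \<Longrightarrow> distinct p"
proof (induction p)
  case Nil then show ?case by simp
next
  case (Cons x p)
  note Cp = Cons.prems and CIH = Cons.IH
  show ?case
  proof (cases p)
    case Nil then show ?thesis by simp
  next
    case (Cons y q)
    have 1: "f x = Suc (f y)" "successively (\<lambda>x y. f x = Suc (f y)) p" using Cp(1) \<open>p = y # q\<close> by simp_all
    have hp: "hd p = y" "tl p = q" "p \<noteq> []" using \<open>p = y # q\<close> by simp_all
    have L: "\<forall>z\<in>set (tl p). f z < f (hd p)" using succ_decr_last[OF 1(2) hp(3)] by blast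
    have L2: "\<forall>z\<in>set q. f z < f y" using L unfolding hp(1,2) .
    have "x \<noteq> y" using 1(1) by auto
    moreover have "x \<notin> set q" using L2 1(1) by (metis Suc_lessD less_not_refl)
    ultimately have "x \<notin> set p" using \<open>p = y # q\<close> by simp
    then show ?thesis using CIH[OF 1(2)] by simp
  qed
qed

lemma core_reach:
  assumes "wk E r s a" "wk E r s b"
  shows "y \<in> geo E s a \<Longrightarrow> wk E (r - dst E s y) y b \<Longrightarrow>
    \<exists>p. p \<noteq> [] \<and> hd p = s \<and> last p = y \<and> set p \<subseteq> {y \<in> geo E s a. wk E (r - dst E s y) y b}
      \<and> successively (\<lambda>x y. (x, y) \<in> E \<and> dst E s y = Suc (dst E s x)) p"
proof (induction "dst E s y" arbitrary: y rule: less_induct)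
  case less
  show ?case
  proof (cases "y = s")
    case True then show ?thesis using less.prems by (intro exI[of _ "[s]"]) auto
  next
    case False
    obtain w where w: "(w, y) \<in> E" "w \<in> geo E s a" "dst E s y = Suc (dst E s w)"
      using geo_pred[OF less.prems(1) False] by blast
    have "dst E s y \<le> r" using geo_basic[OF less.prems(1) assms(1)] by simp
    then have rr: "r - dst E s w = Suc (r - dst E s y)" using w(3) by simp
    have Pw: "wk E (r - dst E s w) w b" unfolding rr using wk_step[OF w(1) less.prems(2)] .
    obtain p where p: "p \<noteq> []" "hd p = s" "last p = w" "set p \<subseteq> {y \<in> geo E s a. wk E (r - dst E s y) y b}"
      "successively (\<lambda>x y. (x, y) \<in> E \<and> dst E s y = Suc (dst E s x)) p"
      using less.hyps[of w] w(2,3) Pw by auto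
    show ?thesis
      by (intro exI[of _ "p @ [y]"]) (use p w less.prems in \<open>auto simp: successively_append_iff\<close>)
  qed
qed

lemma tail_reach:
  assumes "wk E r s a" "wk E r s b"
  shows "y \<in> geo E s a \<Longrightarrow> \<not> wk E (r - dst E s y) y b \<Longrightarrow>
    \<exists>p. p \<noteq> [] \<and> hd p = y \<and> last p = a \<and> set p \<subseteq> {y \<in> geo E s a. \<not> wk E (r - dst E s y) y b}
      \<and> successively (\<lambda>x y. (x, y) \<in> E \<and> dst E x a = Suc (dst E y a)) p"
proof (induction "dst E y a" arbitrary: y rule: less_induct)
  case less
  show ?case
  proof (cases "y = a")
    case True then show ?thesis using less.prems by (intro exI[of _ "[a]"]) auto
  next
    case False
    obtain y' where y': "(y, y') \<in> E" "y' \<in> geo E s a" "dst E s y' = Suc (dst E s y)"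
        "Suc (dst E y' a) = dst E y a" using geo_succ[OF less.prems(1) False] by blast
    have "dst E s y' \<le> r" using geo_basic[OF y'(2) assms(1)] by simp
    then have rr: "r - dst E s y = Suc (r - dst E s y')" using y'(3) by simp
    have Py: "\<not> wk E (r - dst E s y') y' b"
      using less.prems(2) wk_step[OF y'(1), of "r - dst E s y'" b] unfolding rr by blast
    obtain p where p: "p \<noteq> []" "hd p = y'" "last p = a" "set p \<subseteq> {y \<in> geo E s a. \<not> wk E (r - dst E s y) y b}"
      "successively (\<lambda>x y. (x, y) \<in> E \<and> dst E x a = Suc (dst E y a)) p"
      using less.hyps[of y'] y'(2,4) Py by auto
    show ?thesis
      by (intro exI[of _ "y # p"]) (use p y' less.prems in \<open>auto simp: successively_Cons\<close>)
  qed
qed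



lemma crown_V_iff: "v \<in> crown_V K \<longleftrightarrow> (\<exists>i. v = Inl i \<and> 1 \<le> i \<and> i \<le> K) \<or> (\<exists>p q. v = Inr (p,q) \<and> 1 \<le> p \<and> p < q \<and> q \<le> K)"
  unfolding crown_V_def crown_pairs_def by auto

lemma crown_E_iff: "e \<in> crown_E K \<longleftrightarrow> (\<exists>p q. 1 \<le> p \<and> p < q \<and> q \<le> K \<and> (e = (Inr (p,q), Inl p) \<or> e = (Inr (p,q), Inl q)))"
  unfolding crown_E_def crown_pairs_def by auto

lemma geo_reach2: "y \<in> geo E s a \<Longrightarrow> wk E r s a \<Longrightarrow> wk E r y z \<Longrightarrow> wk E (r + r) s z"
  using geo_basic[of y E s a r] wk_trans[of E r s y r z] by blast

lemma geo_in_V: "E \<subseteq> V \<times> V \<Longrightarrow> s \<in> V \<Longrightarrow> y \<in> geo E s a \<Longrightarrow> wk E r s a \<Longrightarrow> y \<in> V"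
  using geo_basic[of y E s a r] wk_V[of E r s y V] by blast

lemma path_single: "x \<in> B \<Longrightarrow> path_in B A x x"
  unfolding path_in_def dipath_def by (intro exI[of _ "[x]"]) simp


lemma crown_build:
  fixes V :: "'a set" and E :: "('a \<times> 'a) set" and X :: "'a set" and gs :: "'a \<Rightarrow> 'a \<Rightarrow> 'a" and r K :: nat
  assumes EV: "E \<subseteq> V \<times> V" and XV: "X \<subseteq> V" and fX: "finite X" and cX: "card X = K"
    and gsV: "\<And>u w. u \<in> X \<Longrightarrow> w \<in> X \<Longrightarrow> u \<noteq> w \<Longrightarrow> gs u w \<in> V \<and> wk E r (gs u w) u \<and> wk E r (gs u w) w"
    and good1: "\<And>u w z. u \<in> X \<Longrightarrow> w \<in> X \<Longrightarrow> z \<in> X \<Longrightarrow> u \<noteq> w \<Longrightarrow> z \<noteq> u \<Longrightarrow> z \<noteq> w \<Longrightarrow> \<not> wk E (r + r) (gs u w) z"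
    and good2: "\<And>u w. u \<in> X \<Longrightarrow> w \<in> X \<Longrightarrow> u \<noteq> w \<Longrightarrow> \<not> wk E r u w"
  shows "depth_minor r (crown_V K) (crown_E K) V E"
proof -
  obtain g where g: "bij_betw g {1..K} X" using finite_same_card_bij[of "{1..K}" X] fX cX by auto
  have gX: "g i \<in> X" if "i \<in> {1..K}" for i using g that bij_betwE by blast
  have ginj: "i = j" if "i \<in> {1..K}" "j \<in> {1..K}" "g i = g j" for i j
    using g that unfolding bij_betw_def inj_on_def by blast
  define sg where "sg p q = gs (g (min p q)) (g (max p q))" for p q
  have sg_sym: "sg p q = sg q p" for p q unfolding sg_def by (simp add: min.commute max.commute)
  have sgP: "sg p q \<in> V \<and> wk E r (sg p q) (g p) \<and> wk E r (sg p q) (g q)"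
    if "p \<in> {1..K}" "q \<in> {1..K}" "p \<noteq> q" for p q
  proof (cases "p < q")
    case True
    then have "sg p q = gs (g p) (g q)" unfolding sg_def by simp
    moreover have "g p \<noteq> g q" using ginj that by blast
    ultimately show ?thesis using gsV[of "g p" "g q"] gX that by simp
  next
    case False
    then have "sg p q = gs (g q) (g p)" unfolding sg_def by simp
    moreover have "g p \<noteq> g q" using ginj that by blast
    ultimately show ?thesis using gsV[of "g q" "g p"] gX that by simp
  qed
  have sgG: "\<not> wk E (r + r) (sg p q) z"
    if "p \<in> {1..K}" "q \<in> {1..K}" "p \<noteq> q" "z \<in> X" "z \<noteq> g p" "z \<noteq> g q" for p q z
  proof (cases "p < q")
    case True
    then have "sg p q = gs (g p) (g q)" unfolding sg_def by simp
    moreover have "g p \<noteq> g q" using ginj that by blast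
    ultimately show ?thesis using good1[of "g p" "g q" z] gX that by simp
  next
    case False
    then have "sg p q = gs (g q) (g p)" unfolding sg_def by simp
    moreover have "g p \<noteq> g q" using ginj that by blast
    ultimately show ?thesis using good1[of "g q" "g p" z] gX that by simp
  qed
  define core where "core p q = {y \<in> geo E (sg p q) (g p). wk E (r - dst E (sg p q) y) y (g q)}
     \<union> {y \<in> geo E (sg p q) (g q). wk E (r - dst E (sg p q) y) y (g p)}" for p q
  define tl' where "tl' i j = {y \<in> geo E (sg i j) (g i). \<not> wk E (r - dst E (sg i j) y) y (g j)}" for i j
  have core_sym: "core p q = core q p" for p q unfolding core_def using sg_sym[of p q] by auto
  define B where "B v = (case v of Inl i \<Rightarrow> insert (g i) (\<Union>j\<in>{1..K}-{i}. tl' i j)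
      | Inr pq \<Rightarrow> core (fst pq) (snd pq))" for v
  define A where "A v = (case v of Inl i \<Rightarrow> {(y,y'). (y,y') \<in> E \<and> y \<in> B v \<and> y' \<in> B v \<and> dst E y (g i) = Suc (dst E y' (g i))}
      | Inr pq \<Rightarrow> {(y,y'). (y,y') \<in> E \<and> y \<in> B v \<and> y' \<in> B v \<and>
           dst E (sg (fst pq) (snd pq)) y' = Suc (dst E (sg (fst pq) (snd pq)) y)})" for v
  define d where "d e = (SOME pr. pr \<in> E \<and> fst pr \<in> B (fst e) \<and> snd pr \<in> B (snd e))" for e
  have BL: "B (Inl i) = insert (g i) (\<Union>j\<in>{1..K}-{i}. tl' i j)" for i unfolding B_def by simp
  have BR: "B (Inr (p,q)) = core p q" for p q unfolding B_def by simp
  have AL: "A (Inl i) = {(y,y'). (y,y') \<in> E \<and> y \<in> B (Inl i) \<and> y' \<in> B (Inl i) \<and> dst E y (g i) = Suc (dst E y' (g i))}" for i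
    unfolding A_def by simp
  have AR: "A (Inr (p,q)) = {(y,y'). (y,y') \<in> E \<and> y \<in> B (Inr (p,q)) \<and> y' \<in> B (Inr (p,q)) \<and>
           dst E (sg p q) y' = Suc (dst E (sg p q) y)}" for p q
    unfolding A_def by simp
  have F1: "wk E r y (g p) \<and> wk E r y (g q) \<and> (\<forall>z\<in>X. wk E r y z \<longrightarrow> z = g p \<or> z = g q)"
    if "p \<in> {1..K}" "q \<in> {1..K}" "p \<noteq> q" "y \<in> core p q" for p q y
  proof -
    have P: "sg p q \<in> V" "wk E r (sg p q) (g p)" "wk E r (sg p q) (g q)" using sgP[OF that(1-3)] by auto
    have Z: "z = g p \<or> z = g q" if "z \<in> X" "wk E r y z" "y \<in> geo E (sg p q) a" "wk E r (sg p q) a" for z a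
      using sgG[OF \<open>p \<in> _\<close> \<open>q \<in> _\<close> \<open>p \<noteq> q\<close> that(1)] geo_reach2[OF that(3,4,2)] by blast
    from that(4) consider "y \<in> geo E (sg p q) (g p)" "wk E (r - dst E (sg p q) y) y (g q)"
      | "y \<in> geo E (sg p q) (g q)" "wk E (r - dst E (sg p q) y) y (g p)" unfolding core_def by blast
    then show ?thesis
    proof cases
      case 1
      have "wk E r y (g p)" using geo_basic[OF 1(1) P(2)] by blast
      moreover have "wk E r y (g q)" by (rule wk_mono[OF 1(2) diff_le_self])
      ultimately show ?thesis using Z[OF _ _ 1(1) P(2)] by blast
    next
      case 2
      have "wk E r y (g q)" using geo_basic[OF 2(1) P(3)] by blast
      moreover have "wk E r y (g p)" by (rule wk_mono[OF 2(2) diff_le_self])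
      ultimately show ?thesis using Z[OF _ _ 2(1) P(3)] by blast
    qed
  qed
  have F2: "wk E r y (g i) \<and> (\<forall>z\<in>X. wk E r y z \<longrightarrow> z = g i \<or> z = g j)"
    if "i \<in> {1..K}" "j \<in> {1..K}" "i \<noteq> j" "y \<in> tl' i j" for i j y
  proof -
    have P: "sg i j \<in> V" "wk E r (sg i j) (g i)" "wk E r (sg i j) (g j)" using sgP[OF that(1-3)] by auto
    have y: "y \<in> geo E (sg i j) (g i)" using that(4) unfolding tl'_def by blast
    have "wk E r y (g i)" using geo_basic[OF y P(2)] by blast
    moreover have "z = g i \<or> z = g j" if "z \<in> X" "wk E r y z" for z
      using sgG[OF \<open>i \<in> _\<close> \<open>j \<in> _\<close> \<open>i \<noteq> j\<close> that(1)] geo_reach2[OF y P(2) that(2)] by blast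
    ultimately show ?thesis by blast
  qed
  have F3: "z = g i" if "i \<in> {1..K}" "z \<in> X" "wk E r (g i) z" for i z
    using good2[OF gX[OF that(1)] that(2)] that(3) by blast
  have F4: "y \<notin> core i j" if "i \<in> {1..K}" "j \<in> {1..K}" "i \<noteq> j" "y \<in> tl' i j" for i j y
  proof
    assume yc: "y \<in> core i j"
    have P: "wk E r (sg i j) (g j)" using sgP[OF that(1-3)] by auto
    have t: "y \<in> geo E (sg i j) (g i)" "\<not> wk E (r - dst E (sg i j) y) y (g j)" using that(4) unfolding tl'_def by auto
    from yc consider "wk E (r - dst E (sg i j) y) y (g j)" | "y \<in> geo E (sg i j) (g j)" unfolding core_def by blast
    then show False
    proof cases
      case 1 then show False using t by blast
    next
      case 2 then show False using geo_G[OF 2 P] t by blast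
    qed
  qed
  have F5: "y \<notin> tl' j i" if "i \<in> {1..K}" "j \<in> {1..K}" "i \<noteq> j" "y \<in> tl' i j" for i j y
  proof
    assume "y \<in> tl' j i"
    then have yg: "y \<in> geo E (sg i j) (g j)" unfolding tl'_def using sg_sym[of i j] by auto
    have P: "wk E r (sg i j) (g j)" using sgP[OF that(1-3)] by auto
    have t: "\<not> wk E (r - dst E (sg i j) y) y (g j)" using that(4) unfolding tl'_def by auto
    then show False using geo_G[OF yg P] by blast
  qed
  have gI: "g a = g b \<longleftrightarrow> a = b" if "a \<in> {1..K}" "b \<in> {1..K}" for a b
    using ginj[OF that] by blast
  have memL: "wk E r y (g i) \<and> (y = g i \<or> (\<exists>j. j \<in> {1..K} \<and> j \<noteq> i \<and> y \<in> tl' i j))"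
    if "i \<in> {1..K}" "y \<in> B (Inl i)" for i y
  proof -
    from that(2) have "y = g i \<or> (\<exists>j. j \<in> {1..K} \<and> j \<noteq> i \<and> y \<in> tl' i j)" unfolding BL by blast
    moreover have "wk E r y (g i)" if "y = g i" using that by simp
    moreover have "wk E r y (g i)" if "j \<in> {1..K}" "j \<noteq> i" "y \<in> tl' i j" for j
      using F2[OF \<open>i \<in> _\<close> that(1) _ that(3)] that(2) by auto
    ultimately show ?thesis by blast
  qed
  have sgcore: "sg p q \<in> core p q" if "p \<in> {1..K}" "q \<in> {1..K}" "p \<noteq> q" for p q
  proof -
    have P: "wk E r (sg p q) (g p)" "wk E r (sg p q) (g q)" using sgP[OF that] by auto
    have "wk E (r - dst E (sg p q) (sg p q)) (sg p q) (g q)" using P(2) by simp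
    then show ?thesis unfolding core_def using geo_s[OF P(1)] by blast
  qed
  have dex: "\<exists>pr. pr \<in> E \<and> fst pr \<in> B (fst e) \<and> snd pr \<in> B (snd e)" if he: "e \<in> crown_E K" for e
  proof -
    obtain p q where pq: "1 \<le> p" "p < q" "q \<le> K" "e = (Inr (p,q), Inl p) \<or> e = (Inr (p,q), Inl q)"
      using he unfolding crown_E_iff by blast
    have pK: "p \<in> {1..K}" "q \<in> {1..K}" "p \<noteq> q" using pq by auto
    have P: "wk E r (sg p q) (g p)" "wk E r (sg p q) (g q)" using sgP[OF pK] by auto
    have gne: "g p \<noteq> g q" using ginj pK by blast
    have ng: "\<not> wk E r (g p) (g q)" "\<not> wk E r (g q) (g p)"
      using good2[OF gX[OF pK(1)] gX[OF pK(2)] gne] good2[OF gX[OF pK(2)] gX[OF pK(1)]] gne by auto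
    from pq(4) show ?thesis
    proof
      assume e: "e = (Inr (p,q), Inl p)"
      obtain x x' where xx: "(x, x') \<in> E" "x \<in> geo E (sg p q) (g p)" "wk E (r - dst E (sg p q) x) x (g q)"
        "x' \<in> geo E (sg p q) (g p)" "\<not> wk E (r - dst E (sg p q) x') x' (g q)"
        using bridge[OF P(1) P(2) ng(1)] by blast
      have "x \<in> B (Inr (p,q))" unfolding BR core_def using xx(2,3) by blast
      moreover have "x' \<in> tl' p q" unfolding tl'_def using xx(4,5) by blast
      then have "x' \<in> B (Inl p)" unfolding BL using pK by blast
      ultimately show ?thesis using xx(1) e by (intro exI[of _ "(x, x')"]) simp
    next
      assume e: "e = (Inr (p,q), Inl q)"
      obtain x x' where xx: "(x, x') \<in> E" "x \<in> geo E (sg p q) (g q)" "wk E (r - dst E (sg p q) x) x (g p)"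
        "x' \<in> geo E (sg p q) (g q)" "\<not> wk E (r - dst E (sg p q) x') x' (g p)"
        using bridge[OF P(2) P(1) ng(2)] by blast
      have "x \<in> B (Inr (p,q))" unfolding BR core_def using xx(2,3) by blast
      moreover have "x' \<in> tl' q p" unfolding tl'_def using xx(4,5) sg_sym[of p q] by simp
      then have "x' \<in> B (Inl q)" unfolding BL using pK by blast
      ultimately show ?thesis using xx(1) e by (intro exI[of _ "(x, x')"]) simp
    qed
  qed
  have c3: "\<forall>e\<in>crown_E K. d e \<in> E \<and> fst (d e) \<in> B (fst e) \<and> snd (d e) \<in> B (snd e)"
  proof
    fix e assume "e \<in> crown_E K"
    show "d e \<in> E \<and> fst (d e) \<in> B (fst e) \<and> snd (d e) \<in> B (snd e)"
      unfolding d_def by (rule someI_ex[OF dex[OF \<open>e \<in> crown_E K\<close>]])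
  qed
  have c1: "\<forall>v\<in>crown_V K. B v \<subseteq> V \<and> A v \<subseteq> E \<inter> (B v \<times> B v)"
  proof
    fix v assume "v \<in> crown_V K"
    then consider i where "v = Inl i" "i \<in> {1..K}" | p q where "v = Inr (p,q)" "p \<in> {1..K}" "q \<in> {1..K}" "p \<noteq> q"
      unfolding crown_V_iff by force
    then show "B v \<subseteq> V \<and> A v \<subseteq> E \<inter> (B v \<times> B v)"
    proof cases
      case 1
      have "B v \<subseteq> V"
      proof
        fix y assume "y \<in> B v"
        then have "y = g i \<or> (\<exists>j. j \<in> {1..K} \<and> j \<noteq> i \<and> y \<in> tl' i j)" using memL[OF 1(2)] 1(1) by blast
        then show "y \<in> V"
        proof
          assume "y = g i" then show ?thesis using gX[OF 1(2)] XV by blast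
        next
          assume "\<exists>j. j \<in> {1..K} \<and> j \<noteq> i \<and> y \<in> tl' i j"
          then obtain j where j: "j \<in> {1..K}" "j \<noteq> i" "y \<in> tl' i j" by blast
          have P: "sg i j \<in> V" "wk E r (sg i j) (g i)" using sgP[OF 1(2) j(1)] j(2) by auto
          have "y \<in> geo E (sg i j) (g i)" using j(3) unfolding tl'_def by blast
          then show ?thesis using geo_in_V[OF EV P(1) _ P(2)] by blast
        qed
      qed
      moreover have "A v \<subseteq> E \<inter> (B v \<times> B v)" unfolding 1(1) AL by blast
      ultimately show ?thesis by blast
    next
      case 2
      have P: "sg p q \<in> V" "wk E r (sg p q) (g p)" "wk E r (sg p q) (g q)" using sgP[OF 2(2-4)] by auto
      have "B v \<subseteq> V" unfolding 2(1) BR core_def using geo_in_V[OF EV P(1) _ P(2)] geo_in_V[OF EV P(1) _ P(3)] by blast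
      moreover have "A v \<subseteq> E \<inter> (B v \<times> B v)" unfolding 2(1) AR by blast
      ultimately show ?thesis by blast
    qed
  qed
  have LL: "False" if "i \<in> {1..K}" "i' \<in> {1..K}" "i \<noteq> i'" "y \<in> B (Inl i)" "y \<in> B (Inl i')" for i i' y
  proof -
    have gi: "g i \<noteq> g i'" using ginj that(1-3) by blast
    from memL[OF that(1,4)] memL[OF that(2,5)]
    have m: "y = g i \<or> (\<exists>j. j \<in> {1..K} \<and> j \<noteq> i \<and> y \<in> tl' i j)"
      "y = g i' \<or> (\<exists>j. j \<in> {1..K} \<and> j \<noteq> i' \<and> y \<in> tl' i' j)"
      "wk E r y (g i)" "wk E r y (g i')" by auto
    show False
    proof (cases "y = g i")
      case True
      then have "g i' = g i" using F3[OF that(1) gX[OF that(2)]] m(4) by simp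
      then show False using gi by simp
    next
      case False
      then obtain j where j: "j \<in> {1..K}" "j \<noteq> i" "y \<in> tl' i j" using m(1) by blast
      show False
      proof (cases "y = g i'")
        case True
        then have "g i = g i'" using F3[OF that(2) gX[OF that(1)]] m(3) by simp
        then show False using gi by simp
      next
        case False
        then obtain j' where j': "j' \<in> {1..K}" "j' \<noteq> i'" "y \<in> tl' i' j'" using m(2) by blast
        have "g i' = g i \<or> g i' = g j" using F2[OF that(1) j(1) j(2)[symmetric] j(3)] gX[OF that(2)] m(4) by blast
        then have ij: "i' = j" using gi unfolding gI[OF that(2) j(1)] by auto
        have "g i = g i' \<or> g i = g j'" using F2[OF that(2) j'(1) j'(2)[symmetric] j'(3)] gX[OF that(1)] m(3) by blast
        then have ij': "i = j'" using gi unfolding gI[OF that(1) j'(1)] by auto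
        show False using F5[OF that(1) that(2) that(3) j(3)[unfolded ij[symmetric]]] j'(3)[unfolded ij'[symmetric]] by blast
      qed
    qed
  qed
  have LR: "False" if "i \<in> {1..K}" "p \<in> {1..K}" "q \<in> {1..K}" "p \<noteq> q" "y \<in> B (Inl i)" "y \<in> core p q" for i p q y
  proof -
    have f1: "wk E r y (g p)" "wk E r y (g q)" "\<forall>z\<in>X. wk E r y z \<longrightarrow> z = g p \<or> z = g q"
      using F1[OF that(2-4,6)] by auto
    have gpq: "g p \<noteq> g q" using ginj that(2-4) by blast
    have m: "y = g i \<or> (\<exists>j. j \<in> {1..K} \<and> j \<noteq> i \<and> y \<in> tl' i j)" "wk E r y (g i)" using memL[OF that(1,5)] by auto
    show False
    proof (cases "y = g i")
      case True
      then have "g p = g i" "g q = g i" using F3[OF that(1) gX[OF that(2)]] F3[OF that(1) gX[OF that(3)]] f1 by auto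
      then show False using gpq by simp
    next
      case False
      then obtain j where j: "j \<in> {1..K}" "j \<noteq> i" "y \<in> tl' i j" using m(1) by blast
      have f2: "\<forall>z\<in>X. wk E r y z \<longrightarrow> z = g i \<or> z = g j" using F2[OF that(1) j(1) j(2)[symmetric] j(3)] by blast
      have a: "g p = g i \<or> g p = g j" "g q = g i \<or> g q = g j"
        using f2 f1(1,2) gX[OF that(2)] gX[OF that(3)] by blast+
      have "(p = i \<and> q = j) \<or> (p = j \<and> q = i)"
        using a that(4) unfolding gI[OF that(2) that(1)] gI[OF that(2) j(1)] gI[OF that(3) that(1)] gI[OF that(3) j(1)]
        by blast
      then have "core p q = core i j" using core_sym by blast
      then show False using F4[OF that(1) j(1) j(2)[symmetric] j(3)] that(6) by simp
    qed
  qed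
  have RR: "False" if "p \<in> {1..K}" "q \<in> {1..K}" "p < q" "p' \<in> {1..K}" "q' \<in> {1..K}" "p' < q'"
    "(p, q) \<noteq> (p', q')" "y \<in> core p q" "y \<in> core p' q'" for p q p' q' y
  proof -
    have f1: "wk E r y (g p)" "wk E r y (g q)" "\<forall>z\<in>X. wk E r y z \<longrightarrow> z = g p \<or> z = g q"
      using F1[OF that(1,2) _ that(8)] that(3) by auto
    have f1': "wk E r y (g p')" "wk E r y (g q')" "\<forall>z\<in>X. wk E r y z \<longrightarrow> z = g p' \<or> z = g q'"
      using F1[OF that(4,5) _ that(9)] that(6) by auto
    have "g p = g p' \<or> g p = g q'" "g q = g p' \<or> g q = g q'" using f1' f1(1,2) gX[OF that(1)] gX[OF that(2)] by blast+
    then have "p = p' \<or> p = q'" "q = p' \<or> q = q'"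
      unfolding gI[OF that(1) that(4)] gI[OF that(1) that(5)] gI[OF that(2) that(4)] gI[OF that(2) that(5)] by blast+
    moreover have "g p' = g p \<or> g p' = g q" "g q' = g p \<or> g q' = g q" using f1 f1'(1,2) gX[OF that(4)] gX[OF that(5)] by blast+
    then have "p' = p \<or> p' = q" "q' = p \<or> q' = q"
      unfolding gI[OF that(4) that(1)] gI[OF that(4) that(2)] gI[OF that(5) that(1)] gI[OF that(5) that(2)] by blast+
    ultimately show False using that(3,6,7) by auto
  qed
  have c2: "\<forall>u\<in>crown_V K. \<forall>v\<in>crown_V K. u \<noteq> v \<longrightarrow> B u \<inter> B v = {}"
  proof (intro ballI impI)
    fix u v assume uv: "u \<in> crown_V K" "v \<in> crown_V K" "u \<noteq> v"
    show "B u \<inter> B v = {}"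
    proof (rule ccontr)
      assume "B u \<inter> B v \<noteq> {}"
      then obtain y where y: "y \<in> B u" "y \<in> B v" by blast
      from uv(1) consider i where "u = Inl i" "i \<in> {1..K}" | p q where "u = Inr (p,q)" "p \<in> {1..K}" "q \<in> {1..K}" "p < q"
        unfolding crown_V_iff by force
      then show False
      proof cases
        case u1: 1
        from uv(2) consider i' where "v = Inl i'" "i' \<in> {1..K}" | p' q' where "v = Inr (p',q')" "p' \<in> {1..K}" "q' \<in> {1..K}" "p' < q'"
          unfolding crown_V_iff by force
        then show False
        proof cases
          case 1 then show False using LL[OF u1(2) 1(2) _ y(1)[unfolded u1(1)] y(2)[unfolded 1(1)]] uv(3) u1(1) by blast
        next
          case 2 then show False using LR[OF u1(2) 2(2,3) _ y(1)[unfolded u1(1)]] y(2)[unfolded 2(1) BR] by simp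
        qed
      next
        case u2: 2
        from uv(2) consider i' where "v = Inl i'" "i' \<in> {1..K}" | p' q' where "v = Inr (p',q')" "p' \<in> {1..K}" "q' \<in> {1..K}" "p' < q'"
          unfolding crown_V_iff by force
        then show False
        proof cases
          case 1 then show False using LR[OF 1(2) u2(2,3) _ y(2)[unfolded 1(1)]] y(1)[unfolded u2(1) BR] u2(4) by simp
        next
          case 2 then show False using RR[OF u2(2-4) 2(2-4) _ y(1)[unfolded u2(1) BR] y(2)[unfolded 2(1) BR]] uv(3) u2(1) by blast
        qed
      qed
    qed
  qed
  have PL: "path_in (B (Inl i)) (A (Inl i)) x (g i)" if "i \<in> {1..K}" "x \<in> B (Inl i)" for i x
  proof -
    have giB: "g i \<in> B (Inl i)" unfolding BL by blast
    from memL[OF that] have "x = g i \<or> (\<exists>j. j \<in> {1..K} \<and> j \<noteq> i \<and> x \<in> tl' i j)" by blast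
    then show ?thesis
    proof
      assume "x = g i" then show ?thesis using path_single[OF giB] by simp
    next
      assume "\<exists>j. j \<in> {1..K} \<and> j \<noteq> i \<and> x \<in> tl' i j"
      then obtain j where j: "j \<in> {1..K}" "j \<noteq> i" "x \<in> tl' i j" by blast
      have P: "wk E r (sg i j) (g i)" "wk E r (sg i j) (g j)" using sgP[OF that(1) j(1)] j(2) by auto
      have xt: "x \<in> geo E (sg i j) (g i)" "\<not> wk E (r - dst E (sg i j) x) x (g j)" using j(3) unfolding tl'_def by auto
      obtain l where l: "l \<noteq> []" "hd l = x" "last l = g i"
        "set l \<subseteq> {y \<in> geo E (sg i j) (g i). \<not> wk E (r - dst E (sg i j) y) y (g j)}"
        "successively (\<lambda>x y. (x, y) \<in> E \<and> dst E x (g i) = Suc (dst E y (g i))) l"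
        using tail_reach[OF P xt] by blast
      have sub: "set l \<subseteq> B (Inl i)" using l(4) j unfolding BL tl'_def by blast
      have s1: "successively (\<lambda>x y. (x, y) \<in> A (Inl i)) l"
        by (rule succ_mono[OF _ l(5) sub]) (unfold AL, blast)
      have s2: "successively (\<lambda>x y. dst E x (g i) = Suc (dst E y (g i))) l"
        by (rule succ_mono[OF _ l(5) subset_UNIV]) blast
      have "dipath (A (Inl i)) l" unfolding dipath_def using l(1) s1 succ_decr_distinct[OF s2] by blast
      then show ?thesis unfolding path_in_def using sub l(2,3) by blast
    qed
  qed
  have PR: "path_in (B (Inr (p,q))) (A (Inr (p,q))) (sg p q) y"
    if "p \<in> {1..K}" "q \<in> {1..K}" "p \<noteq> q" "y \<in> B (Inr (p,q))" for p q y
  proof -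
    have P: "wk E r (sg p q) (g p)" "wk E r (sg p q) (g q)" using sgP[OF that(1-3)] by auto
    have gen: "path_in (B (Inr (p,q))) (A (Inr (p,q))) (sg p q) y"
      if ga: "wk E r (sg p q) a" "wk E r (sg p q) b" "y \<in> geo E (sg p q) a" "wk E (r - dst E (sg p q) y) y b"
         "{y \<in> geo E (sg p q) a. wk E (r - dst E (sg p q) y) y b} \<subseteq> B (Inr (p,q))" for a b
    proof -
      obtain l where l: "l \<noteq> []" "hd l = sg p q" "last l = y"
        "set l \<subseteq> {y \<in> geo E (sg p q) a. wk E (r - dst E (sg p q) y) y b}"
        "successively (\<lambda>x y. (x, y) \<in> E \<and> dst E (sg p q) y = Suc (dst E (sg p q) x)) l"
        using core_reach[OF ga(1,2,3,4)] by blast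
      have sub: "set l \<subseteq> B (Inr (p,q))" using l(4) ga(5) by blast
      have s1: "successively (\<lambda>x y. (x, y) \<in> A (Inr (p,q))) l"
        by (rule succ_mono[OF _ l(5) sub]) (unfold AR, blast)
      have s2: "successively (\<lambda>x y. dst E (sg p q) y = Suc (dst E (sg p q) x)) l"
        by (rule succ_mono[OF _ l(5) subset_UNIV]) blast
      have "dipath (A (Inr (p,q))) l" unfolding dipath_def using l(1) s1 succ_incr_distinct[OF s2] by blast
      then show ?thesis unfolding path_in_def using sub l(2,3) by blast
    qed
    from that(4) consider "y \<in> geo E (sg p q) (g p)" "wk E (r - dst E (sg p q) y) y (g q)"
      | "y \<in> geo E (sg p q) (g q)" "wk E (r - dst E (sg p q) y) y (g p)" unfolding BR core_def by blast
    then show ?thesis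
    proof cases
      case 1 then show ?thesis using gen[OF P(1) P(2)] unfolding BR core_def by blast
    next
      case 2 then show ?thesis using gen[OF P(2) P(1)] unfolding BR core_def by blast
    qed
  qed
  have DL: "length l - 1 \<le> r" if "i \<in> {1..K}" "dipath (A (Inl i)) l" "set l \<subseteq> B (Inl i)" for i l
  proof -
    have l: "l \<noteq> []" "successively (\<lambda>x y. (x, y) \<in> A (Inl i)) l" using that(2) unfolding dipath_def by auto
    have s2: "successively (\<lambda>x y. dst E x (g i) = Suc (dst E y (g i))) l"
      by (rule succ_mono[OF _ l(2) subset_UNIV]) (unfold AL, blast)
    have e: "dst E (hd l) (g i) = dst E (last l) (g i) + (length l - 1)" using succ_decr_last[OF s2 l(1)] by blast
    have hB: "hd l \<in> B (Inl i)" using that(3) l(1) by auto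
    have "dst E (hd l) (g i) \<le> r"
    proof -
      from memL[OF that(1) hB] have "hd l = g i \<or> (\<exists>j. j \<in> {1..K} \<and> j \<noteq> i \<and> hd l \<in> tl' i j)" by blast
      then show ?thesis
      proof
        assume "hd l = g i" then show ?thesis by simp
      next
        assume "\<exists>j. j \<in> {1..K} \<and> j \<noteq> i \<and> hd l \<in> tl' i j"
        then obtain j where j: "j \<in> {1..K}" "j \<noteq> i" "hd l \<in> tl' i j" by blast
        have P: "wk E r (sg i j) (g i)" using sgP[OF that(1) j(1)] j(2) by auto
        have "hd l \<in> geo E (sg i j) (g i)" using j(3) unfolding tl'_def by blast
        then show ?thesis using geo_basic[OF _ P] by blast
      qed
    qed
    then show ?thesis using e by linarith
  qed
  have DR: "length l - 1 \<le> r" if "p \<in> {1..K}" "q \<in> {1..K}" "p \<noteq> q" "dipath (A (Inr (p,q))) l" "set l \<subseteq> B (Inr (p,q))" for p q l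
  proof -
    have l: "l \<noteq> []" "successively (\<lambda>x y. (x, y) \<in> A (Inr (p,q))) l" using that(4) unfolding dipath_def by auto
    have s2: "successively (\<lambda>x y. dst E (sg p q) y = Suc (dst E (sg p q) x)) l"
      by (rule succ_mono[OF _ l(2) subset_UNIV]) (unfold AR, blast)
    have e: "dst E (sg p q) (last l) = dst E (sg p q) (hd l) + (length l - 1)" using succ_incr_last[OF s2 l(1)] by blast
    have lB: "last l \<in> core p q" using that(5) l(1) unfolding BR by auto
    have P: "wk E r (sg p q) (g p)" "wk E r (sg p q) (g q)" using sgP[OF that(1-3)] by auto
    have "dst E (sg p q) (last l) \<le> r"
      using lB geo_basic[OF _ P(1), of "last l"] geo_basic[OF _ P(2), of "last l"] unfolding core_def by blast
    then show ?thesis using e by linarith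
  qed
  have c4: "\<forall>v\<in>crown_V K.
        (\<forall>x\<in>in_verts (crown_E K) d (B v) v. \<forall>y\<in>out_verts (crown_E K) d (B v) v. path_in (B v) (A v) x y)
      \<and> (\<exists>z\<in>B v. \<forall>y\<in>out_verts (crown_E K) d (B v) v. path_in (B v) (A v) z y)
      \<and> (\<exists>z\<in>B v. \<forall>x\<in>in_verts (crown_E K) d (B v) v. path_in (B v) (A v) x z)"
  proof
    fix v assume "v \<in> crown_V K"
    then consider i where "v = Inl i" "i \<in> {1..K}" | p q where "v = Inr (p,q)" "p \<in> {1..K}" "q \<in> {1..K}" "p \<noteq> q"
      unfolding crown_V_iff by force
    then show "(\<forall>x\<in>in_verts (crown_E K) d (B v) v. \<forall>y\<in>out_verts (crown_E K) d (B v) v. path_in (B v) (A v) x y)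
      \<and> (\<exists>z\<in>B v. \<forall>y\<in>out_verts (crown_E K) d (B v) v. path_in (B v) (A v) z y)
      \<and> (\<exists>z\<in>B v. \<forall>x\<in>in_verts (crown_E K) d (B v) v. path_in (B v) (A v) x z)"
    proof cases
      case 1
      have ne: "\<forall>e\<in>crown_E K. fst e \<noteq> Inl i" by (auto simp: crown_E_iff)
      have "out_verts (crown_E K) d (B v) v = {}"
        unfolding out_verts_def 1(1) using ne by blast
      moreover have "in_verts (crown_E K) d (B v) v \<subseteq> B v" unfolding in_verts_def by blast
      moreover have "g i \<in> B v" unfolding 1(1) BL by blast
      moreover have "\<forall>x\<in>B v. path_in (B v) (A v) x (g i)" using PL[OF 1(2)] unfolding 1(1) by blast
      ultimately show ?thesis by blast
    next
      case 2
      have ne: "\<forall>e\<in>crown_E K. snd e \<noteq> Inr (p,q)" by (auto simp: crown_E_iff)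
      have "in_verts (crown_E K) d (B v) v = {}"
        unfolding in_verts_def 2(1) using ne by blast
      moreover have "out_verts (crown_E K) d (B v) v \<subseteq> B v" unfolding out_verts_def by blast
      moreover have "sg p q \<in> B v" unfolding 2(1) BR using sgcore[OF 2(2-4)] .
      moreover have "\<forall>y\<in>B v. path_in (B v) (A v) (sg p q) y" using PR[OF 2(2-4)] unfolding 2(1) by blast
      ultimately show ?thesis by blast
    qed
  qed
  have c5: "\<forall>v\<in>crown_V K. \<forall>l. dipath (A v) l \<and> set l \<subseteq> B v \<longrightarrow> length l - 1 \<le> r"
  proof (intro ballI allI impI)
    fix v l assume "v \<in> crown_V K" "dipath (A v) l \<and> set l \<subseteq> B v"
    then show "length l - 1 \<le> r"
    proof -
      from \<open>v \<in> crown_V K\<close> consider i where "v = Inl i" "i \<in> {1..K}" | p q where "v = Inr (p,q)" "p \<in> {1..K}" "q \<in> {1..K}" "p \<noteq> q"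
        unfolding crown_V_iff by force
      then show ?thesis
      proof cases
        case 1 then show ?thesis using DL[of i l] \<open>dipath (A v) l \<and> set l \<subseteq> B v\<close> by blast
      next
        case 2 then show ?thesis using DR[of p q l] \<open>dipath (A v) l \<and> set l \<subseteq> B v\<close> by blast
      qed
    qed
  qed
  have "directed_model (crown_V K) (crown_E K) V E B A d"
    unfolding directed_model_def by (intro conjI) (rule c1, rule c2, rule c3, rule c4)
  then show ?thesis unfolding depth_minor_def using c5 by blast
qed

theorem mainTheorem16:
  fixes r c K :: nat
  shows "\<exists>N::nat. \<forall>(V :: 'a set) E S T.
     digraph V E \<and> max_outdeg_le V E c \<and> S \<subseteq> V \<and> T \<subseteq> V \<and> card T \<ge> N
     \<and> (\<forall>t\<in>T. \<forall>t'\<in>T. \<exists>s\<in>S. path_le E r s t \<and> path_le E r s t')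
     \<longrightarrow> depth_minor r (crown_V K) (crown_E K) V E"
proof -
  define L where "L = 2 * Mb c (r + r) + Mb c r"
  obtain N :: nat where N: "\<forall>(T::'a set) Bad Rch. finite T \<and> card T \<ge> N
     \<and> (\<forall>u w. finite (Bad u w) \<and> card (Bad u w) \<le> L \<and> Bad u w = Bad w u)
     \<and> (\<forall>u. finite (Rch u) \<and> card (Rch u) \<le> L)
     \<longrightarrow> (\<exists>X\<subseteq>T. card X = K \<and> (\<forall>u\<in>X. \<forall>w\<in>X. \<forall>z\<in>X. u \<noteq> w \<and> z \<noteq> u \<and> z \<noteq> w \<longrightarrow> z \<notin> Bad u w)
            \<and> (\<forall>u\<in>X. \<forall>w\<in>X. u \<noteq> w \<longrightarrow> w \<notin> Rch u))"
    using select[of L K] by (rule exE)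
  show ?thesis
  proof (rule exI[of _ N], intro allI impI, elim conjE)
    fix V :: "'a set" and E S T
    assume dg: "digraph V E" and md: "max_outdeg_le V E c" and SV: "S \<subseteq> V" and TV: "T \<subseteq> V"
      and cT: "N \<le> card T" and hyp: "\<forall>t\<in>T. \<forall>t'\<in>T. \<exists>s\<in>S. path_le E r s t \<and> path_le E r s t'"
    have fV: "finite V" and EV: "E \<subseteq> V \<times> V" using dg unfolding digraph_def by auto
    have fT: "finite T" using finite_subset[OF TV fV] .
    define gs where "gs u w = (SOME s. s \<in> S \<and> path_le E r s u \<and> path_le E r s w)" for u w
    have gsP: "gs u w \<in> S \<and> path_le E r (gs u w) u \<and> path_le E r (gs u w) w" if "u \<in> T" "w \<in> T" for u w
    proof -
      have "\<exists>s. s \<in> S \<and> path_le E r s u \<and> path_le E r s w" using hyp that by blast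
      then show ?thesis unfolding gs_def by (rule someI_ex)
    qed
    define Bad where "Bad u w = {z. wk E (r + r) (gs u w) z} \<union> {z. wk E (r + r) (gs w u) z}" for u w
    define Rch where "Rch u = {z. wk E r u z}" for u
    have bc: "finite {z. wk E k x z} \<and> card {z. wk E k x z} \<le> Mb c k" for k x
      using ball_card[OF dg md] .
    have hB: "\<forall>u w. finite (Bad u w) \<and> card (Bad u w) \<le> L \<and> Bad u w = Bad w u"
    proof (intro allI conjI)
      fix u w
      show "finite (Bad u w)" unfolding Bad_def using bc by simp
      have "card (Bad u w) \<le> card {z. wk E (r + r) (gs u w) z} + card {z. wk E (r + r) (gs w u) z}"
        unfolding Bad_def by (rule card_Un_le)
      also have "\<dots> \<le> Mb c (r + r) + Mb c (r + r)" by (rule add_mono[OF conjunct2[OF bc] conjunct2[OF bc]])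
      finally show "card (Bad u w) \<le> L" unfolding L_def by simp
      show "Bad u w = Bad w u" unfolding Bad_def by blast
    qed
    have hR: "\<forall>u. finite (Rch u) \<and> card (Rch u) \<le> L"
    proof (intro allI conjI)
      fix u
      show "finite (Rch u)" unfolding Rch_def using bc by simp
      have "card (Rch u) \<le> Mb c r" unfolding Rch_def by (rule conjunct2[OF bc])
      then show "card (Rch u) \<le> L" unfolding L_def by simp
    qed
    obtain X where X: "X \<subseteq> T" "card X = K"
      "\<forall>u\<in>X. \<forall>w\<in>X. \<forall>z\<in>X. u \<noteq> w \<and> z \<noteq> u \<and> z \<noteq> w \<longrightarrow> z \<notin> Bad u w"
      "\<forall>u\<in>X. \<forall>w\<in>X. u \<noteq> w \<longrightarrow> w \<notin> Rch u"
    proof -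
      have pre: "finite T \<and> card T \<ge> N
         \<and> (\<forall>u w. finite (Bad u w) \<and> card (Bad u w) \<le> L \<and> Bad u w = Bad w u)
         \<and> (\<forall>u. finite (Rch u) \<and> card (Rch u) \<le> L)" using fT cT hB hR by blast
      show thesis using mp[OF spec[OF spec[OF spec[OF N, of T], of Bad], of Rch] pre] that by blast
    qed
    have XV: "X \<subseteq> V" using X(1) TV by blast
    have fX: "finite X" using finite_subset[OF XV fV] .
    show "depth_minor r (crown_V K) (crown_E K) V E"
    proof (rule crown_build[OF EV XV fX X(2)])
      fix u w assume "u \<in> X" "w \<in> X" "u \<noteq> w"
      then have "gs u w \<in> S \<and> path_le E r (gs u w) u \<and> path_le E r (gs u w) w" using gsP X(1) by blast
      then have h: "gs u w \<in> S" "path_le E r (gs u w) u" "path_le E r (gs u w) w" by auto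
      show "gs u w \<in> V \<and> wk E r (gs u w) u \<and> wk E r (gs u w) w"
        using SV h(1) path_le_wk[OF h(2)] path_le_wk[OF h(3)] by blast
    next
      fix u w z assume "u \<in> X" "w \<in> X" "z \<in> X" "u \<noteq> w" "z \<noteq> u" "z \<noteq> w"
      then have "z \<notin> Bad u w" using X(3) by blast
      then show "\<not> wk E (r + r) (gs u w) z" unfolding Bad_def by blast
    next
      fix u w assume "u \<in> X" "w \<in> X" "u \<noteq> w"
      then have "w \<notin> Rch u" using X(4) by blast
      then show "\<not> wk E r u w" unfolding Rch_def by blast
    qed
  qed
qed

end
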